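(* Let $X$ be a real Banach space with $\dim X\ge 2$ and let $\alpha,\beta>0$. Let $(f_n)$ be a sequence in $B_{X^*}$ and $(x_n)$ a sequence in $B_X$ such that $\lim_{n\to\infty}f_n(x_n)=1$. Then for any sequence $(g_n)$ in $B_{X^*}$ with $\liminf_{n\to\infty}g_n(x_n)>0$, $$DW(X,\alpha,\beta)\ge(\alpha+\beta)\max\left\{\liminf_{n\to\infty}\|g_n(x_n)f_n-g_n\|,\,1\right\}\ge(\alpha+\beta)\max\left\{\liminf_{n\to\infty}g_n(x_n)\|f_n-g_n\|,\,1\right\}.$$
   Context: $B_X$ and $B_{X^*}$ denote the closed unit balls of $X$ and of its dual $X^*$. For $\alpha,\beta>0$, $$DW(X,\alpha,\beta)=\sup\left\{\frac{\alpha\|x\|+\beta\|y\|}{\|x-y\|}\left\|\frac{x}{\|x\|}-\frac{y}{\|y\|}\right\|: x,y\in X\setminus\{0\},\ x\neq y\right\}.$$ *)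

theory Defs
  imports "HOL-Analysis.Analysis"
begin

text \<open>The constant DW(X,alpha,beta) of the paper. The space X is the type 'a;
  the supremum is a real supremum (the set is nonempty when dim X >= 2 and
  bounded above by 2(alpha+beta)).\<close>
definition DW :: "'a::real_normed_vector itself \<Rightarrow> real \<Rightarrow> real \<Rightarrow> real" where
  "DW _ \<alpha> \<beta> = Sup {(\<alpha> * norm x + \<beta> * norm y) / norm (x - y)
        * norm (inverse (norm x) *\<^sub>R x - inverse (norm y) *\<^sub>R y)
       | x y :: 'a. x \<noteq> 0 \<and> y \<noteq> 0 \<and> x \<noteq> y}"

end

theory Submission
  imports Defs
begin

lemma normalize_bound:
  fixes x y :: "'a::real_normed_vector"
  assumes "x \<noteq> 0" "y \<noteq> 0" "norm y \<le> norm x"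
  shows "norm (inverse (norm x) *\<^sub>R x - inverse (norm y) *\<^sub>R y) \<le> 2 * norm (x - y) / norm x"
proof -
  have nx: "norm x > 0" "norm y > 0" using assms by auto
  have "inverse (norm x) *\<^sub>R x - inverse (norm y) *\<^sub>R y
      = inverse (norm x) *\<^sub>R (x - y) + (inverse (norm x) - inverse (norm y)) *\<^sub>R y"
    by (simp add: algebra_simps)
  hence "norm (inverse (norm x) *\<^sub>R x - inverse (norm y) *\<^sub>R y)
      \<le> norm (inverse (norm x) *\<^sub>R (x - y)) + norm ((inverse (norm x) - inverse (norm y)) *\<^sub>R y)"
    by (metis norm_triangle_ineq)
  also have "norm (inverse (norm x) *\<^sub>R (x - y)) = norm (x - y) / norm x"
    using nx by (simp add: divide_inverse mult.commute)
  also have "norm ((inverse (norm x) - inverse (norm y)) *\<^sub>R y) = \<bar>inverse (norm x) - inverse (norm y)\<bar> * norm y"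
    by simp
  also have "\<bar>inverse (norm x) - inverse (norm y)\<bar> * norm y = (norm x - norm y) / norm x"
  proof -
    have "inverse (norm x) \<le> inverse (norm y)" using nx assms(3) by (simp add: le_imp_inverse_le)
    hence "\<bar>inverse (norm x) - inverse (norm y)\<bar> = inverse (norm y) - inverse (norm x)" by simp
    moreover have "(inverse (norm y) - inverse (norm x)) * norm y = (norm x - norm y)/norm x"
      using nx by (simp add: field_simps)
    ultimately show ?thesis by simp
  qed
  also have "(norm x - norm y) / norm x \<le> norm (x - y) / norm x"
    using nx norm_triangle_ineq2[of x y] by (simp add: divide_right_mono)
  finally show ?thesis by simp
qed

lemma DW_term_bound:
  fixes x y :: "'a::real_normed_vector"
  assumes "x \<noteq> 0" "y \<noteq> 0" "x \<noteq> y" "\<alpha> > 0" "\<beta> > 0"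
  shows "(\<alpha> * norm x + \<beta> * norm y) / norm (x - y)
        * norm (inverse (norm x) *\<^sub>R x - inverse (norm y) *\<^sub>R y) \<le> 2 * (\<alpha> + \<beta>)"
proof -
  define M where "M = max (norm x) (norm y)"
  have M: "M > 0" "norm x \<le> M" "norm y \<le> M" using assms by (auto simp: M_def less_max_iff_disj)
  have d: "norm (x - y) > 0" using assms by simp
  have w: "norm (inverse (norm x) *\<^sub>R x - inverse (norm y) *\<^sub>R y) \<le> 2 * norm (x - y) / M"
  proof (cases "norm y \<le> norm x")
    case True thus ?thesis using normalize_bound[OF assms(1,2) True] by (simp add: M_def max_def)
  next
    case False
    hence "norm (inverse (norm y) *\<^sub>R y - inverse (norm x) *\<^sub>R x) \<le> 2 * norm (y - x) / norm y"
      using normalize_bound[OF assms(2,1)] by simp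
    thus ?thesis using False by (simp add: M_def max_def norm_minus_commute)
  qed
  have A: "0 \<le> \<alpha> * norm x + \<beta> * norm y" "\<alpha> * norm x + \<beta> * norm y \<le> (\<alpha> + \<beta>) * M"
    using assms M by (auto simp: distrib_right intro!: add_mono mult_left_mono)
  have "(\<alpha> * norm x + \<beta> * norm y) / norm (x - y)
        * norm (inverse (norm x) *\<^sub>R x - inverse (norm y) *\<^sub>R y)
      \<le> (\<alpha> * norm x + \<beta> * norm y) / norm (x - y) * (2 * norm (x - y) / M)"
    using w A d by (intro mult_left_mono) auto
  also have "\<dots> = 2 * (\<alpha> * norm x + \<beta> * norm y) / M" using d M by (simp add: field_simps)
  also have "\<dots> \<le> 2 * ((\<alpha> + \<beta>) * M) / M" using A M by (intro divide_right_mono) auto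
  also have "\<dots> = 2 * (\<alpha> + \<beta>)" using M by simp
  finally show ?thesis .
qed

lemma DW_upper:
  fixes x y :: "'a::real_normed_vector"
  assumes "x \<noteq> 0" "y \<noteq> 0" "x \<noteq> y" "\<alpha> > 0" "\<beta> > 0"
  shows "(\<alpha> * norm x + \<beta> * norm y) / norm (x - y)
        * norm (inverse (norm x) *\<^sub>R x - inverse (norm y) *\<^sub>R y) \<le> DW TYPE('a) \<alpha> \<beta>"
  unfolding DW_def
proof (rule cSup_upper)
  show "bdd_above {(\<alpha> * norm x + \<beta> * norm y) / norm (x - y)
        * norm (inverse (norm x) *\<^sub>R x - inverse (norm y) *\<^sub>R y)
       | x y :: 'a. x \<noteq> 0 \<and> y \<noteq> 0 \<and> x \<noteq> y}"
    using DW_term_bound[OF _ _ _ assms(4,5)] by (auto intro!: bdd_aboveI[where M="2*(\<alpha>+\<beta>)"])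
qed (use assms in auto)

lemma DW_lower1:
  fixes u :: "'a::real_normed_vector"
  assumes "u \<noteq> 0" "\<alpha> > 0" "\<beta> > 0"
  shows "\<alpha> + \<beta> \<le> DW TYPE('a) \<alpha> \<beta>"
proof -
  have u: "norm u > 0" using assms by simp
  have ne: "u \<noteq> - u"
  proof
    assume "u = -u" hence "u + u = 0" by (metis add.right_inverse)
    hence "2 *\<^sub>R u = 0" by (simp add: scaleR_2)
    thus False using assms by simp
  qed
  have "(\<alpha> * norm u + \<beta> * norm (-u)) / norm (u - (-u))
        * norm (inverse (norm u) *\<^sub>R u - inverse (norm (-u)) *\<^sub>R (-u)) \<le> DW TYPE('a) \<alpha> \<beta>"
    using DW_upper[of u "-u" \<alpha> \<beta>] assms ne by simp
  moreover have "u - (-u) = 2 *\<^sub>R u" by (simp add: scaleR_2)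
  moreover have "inverse (norm u) *\<^sub>R u - inverse (norm (-u)) *\<^sub>R (-u) = (2 * inverse (norm u)) *\<^sub>R u"
  proof -
    have "(2 * inverse (norm u)) *\<^sub>R u = 2 *\<^sub>R (inverse (norm u) *\<^sub>R u)" by simp
    also have "\<dots> = inverse (norm u) *\<^sub>R u + inverse (norm u) *\<^sub>R u" by (rule scaleR_2)
    finally show ?thesis by simp
  qed
  ultimately have "(\<alpha> * norm u + \<beta> * norm u) / (2 * norm u) * (2 * inverse (norm u) * norm u) \<le> DW TYPE('a) \<alpha> \<beta>"
    by simp
  hence "(\<alpha>+\<beta>) * (2*norm u) \<le> DW TYPE('a) \<alpha> \<beta> * (2*norm u)" using u by (simp add: field_simps)
  thus ?thesis using u by (simp add: mult_le_cancel_right)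
qed

lemma pointwise:
  fixes f g :: "'a::real_normed_vector \<Rightarrow>\<^sub>L real"
  assumes "norm f \<le> 1" "\<bar>c\<bar> \<le> 1" "c * norm (f - g) > 1"
  shows "c * norm (f - g) \<le> norm (c *\<^sub>R f - g)"
proof -
  have c: "0 < c" "c \<le> 1" using assms(2,3) norm_ge_zero[of "f-g"]
    by (smt (verit) mult_nonpos_nonneg)+
  have "f - g = (c *\<^sub>R f - g) + (1 - c) *\<^sub>R f" by (simp add: algebra_simps)
  hence a1: "norm (f - g) \<le> norm (c *\<^sub>R f - g) + (1 - c) * norm f"
    using c by (metis abs_of_nonneg diff_ge_0_iff_ge norm_scaleR norm_triangle_ineq)
  have "(1 - c) * norm f \<le> 1 - c" using c assms(1) by (simp add: mult_left_le)
  hence a: "norm (f - g) \<le> norm (c *\<^sub>R f - g) + (1 - c)" using a1 by linarith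
  have "norm (f - g) > 1" using assms(3) c
    by (smt (verit) mult_left_le_one_le norm_ge_zero)
  hence "(1 - c) * 1 \<le> (1 - c) * norm (f - g)" using c by (intro mult_left_mono) auto
  thus ?thesis using a by (simp add: algebra_simps)
qed

lemma approx_norm:
  fixes h :: "'a::real_normed_vector \<Rightarrow>\<^sub>L real"
  assumes "norm h > l" "l > 0"
  shows "\<exists>z. norm z \<le> 1 \<and> blinfun_apply h z \<ge> l"
proof (rule ccontr)
  assume "\<not> ?thesis"
  hence H: "\<And>z. norm z \<le> 1 \<Longrightarrow> blinfun_apply h z < l" by force
  have "\<bar>blinfun_apply h z\<bar> \<le> l * norm z" for z
  proof (cases "z = 0")
    case True thus ?thesis by simp
  next
    case False
    define v where "v = inverse (norm z) *\<^sub>R z"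
    have nv: "norm v \<le> 1" "norm (-v) \<le> 1" using False by (simp_all add: v_def)
    have "blinfun_apply h v < l" "blinfun_apply h (-v) < l" using H nv by auto
    hence "\<bar>blinfun_apply h v\<bar> \<le> l" by (simp add: blinfun.minus_right)
    moreover have "blinfun_apply h v = blinfun_apply h z / norm z"
      by (simp add: v_def blinfun.scaleR_right divide_inverse mult.commute)
    ultimately show ?thesis using False by (simp add: abs_div pos_divide_le_eq)
  qed
  hence "norm h \<le> l" using assms(2) by (intro norm_blinfun_bound) auto
  thus False using assms by simp
qed

lemma key:
  fixes f g :: "'a::real_normed_vector \<Rightarrow>\<^sub>L real" and u z :: 'a
  assumes nu: "norm u \<le> 1" and nf: "norm f \<le> 1" and ng: "norm g \<le> 1"
    and c0: "0 \<le> blinfun_apply g u" and nz: "norm z \<le> 1"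
    and hz: "blinfun_apply g z - blinfun_apply g u * blinfun_apply f z \<ge> l"
    and l: "l > 0" and s: "s > 0" and d: "\<delta> = 1 - blinfun_apply f u"
    and p1: "l - \<delta> - \<delta> / s > 0" and p2: "1 - \<delta> - s > 0"
    and \<alpha>: "\<alpha> > 0" and \<beta>: "\<beta> > 0"
  shows "((\<alpha> + \<beta>) * (1 - \<delta>) - \<beta> * s) * (l - \<delta> - \<delta> / s) / (1 + s) \<le> DW TYPE('a) \<alpha> \<beta>"
proof -
  define c where "c = blinfun_apply g u"
  define y where "y = u - s *\<^sub>R z"
  define r where "r = norm u"
  define N where "N = norm y"
  have abs_le: "\<bar>blinfun_apply h v\<bar> \<le> 1" if "norm h \<le> 1" "norm v \<le> 1" for h :: "'a \<Rightarrow>\<^sub>L real" and v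
  proof -
    have "\<bar>blinfun_apply h v\<bar> \<le> norm h * norm v" using norm_blinfun[of h v] by simp
    also have "\<dots> \<le> 1" using that by (intro mult_le_one) auto
    finally show ?thesis .
  qed
  have lin_le: "blinfun_apply h v \<le> norm v" if "norm h \<le> 1" for h :: "'a \<Rightarrow>\<^sub>L real" and v
  proof -
    have "blinfun_apply h v \<le> norm h * norm v" using norm_blinfun[of h v] by simp
    also have "\<dots> \<le> 1 * norm v" using that by (intro mult_right_mono) auto
    finally show ?thesis by simp
  qed
  have fu_le: "blinfun_apply f u \<le> r" using lin_le[OF nf] by (simp add: r_def)
  have c1: "c \<le> 1" using abs_le[OF ng nu] by (simp add: c_def)
  have fz: "blinfun_apply f z \<le> 1" "blinfun_apply f z \<ge> -1" using abs_le[OF nf nz] by auto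
  have gz: "\<bar>blinfun_apply g z\<bar> \<le> 1" using abs_le[OF ng nz] .
  have r: "1 - \<delta> \<le> r" "r \<le> 1" using fu_le d nu by (auto simp: r_def)
  have dpos: "\<delta> \<ge> 0" using r by simp
  have r0: "r > 0" using r p2 s by simp
  have fy: "blinfun_apply f y = 1 - \<delta> - s * blinfun_apply f z"
    by (simp add: y_def d blinfun.diff_right blinfun.scaleR_right)
  have "blinfun_apply f y \<le> N"
    using lin_le[OF nf] by (simp add: N_def)
  hence N1: "N \<ge> 1 - \<delta> - s * blinfun_apply f z" using fy by simp
  have "s * blinfun_apply f z \<le> s" using fz s by (simp add: mult_left_le)
  hence N2: "N \<ge> 1 - \<delta> - s" using N1 by linarith
  have N0: "N > 0" using N2 p2 by simp
  have N3: "N \<le> 1 + s"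
  proof -
    have "N \<le> norm u + norm (s *\<^sub>R z)" unfolding N_def y_def by (rule norm_triangle_ineq4)
    also have "norm (s *\<^sub>R z) \<le> s" using s nz by (simp add: mult_left_le)
    finally show ?thesis using nu by simp
  qed
  have z0: "z \<noteq> 0" using hz l by (auto simp: blinfun.zero_right)
  have u0: "u \<noteq> 0" using r0 by (auto simp: r_def)
  have y0: "y \<noteq> 0" using N0 by (auto simp: N_def)
  have uy: "u \<noteq> y" using z0 s by (simp add: y_def)
  have nuy: "norm (u - y) = s * norm z" using s by (simp add: y_def)
  have nuy0: "norm (u - y) > 0" using uy by simp
  define w where "w = inverse (norm u) *\<^sub>R u - inverse (norm y) *\<^sub>R y"
  have gw: "blinfun_apply g w = c / r - (c - s * blinfun_apply g z) / N"
    by (simp add: w_def c_def r_def N_def y_def blinfun.diff_right blinfun.scaleR_right divide_inverse mult.commute)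
  have gw2: "blinfun_apply g w = (c * (N - r) + r * s * blinfun_apply g z) / (r * N)"
    unfolding gw using r0 N0 by (simp add: field_simps)
  define P where "P = s * l - s * \<delta> - \<delta>"
  have P0: "P > 0" using p1 s by (simp add: P_def field_simps)
  have num: "c * (N - r) + r * s * blinfun_apply g z \<ge> P"
  proof -
    have "c * (N - r) \<ge> c * (- \<delta> - s * blinfun_apply f z)"
      using c0 N1 r by (intro mult_left_mono) (auto simp: c_def)
    moreover have "r * s * blinfun_apply g z \<ge> s * blinfun_apply g z - s * \<delta>"
    proof -
      have "(1 - r) * blinfun_apply g z \<le> (1 - r)" using gz r by (intro mult_left_le) auto
      hence "(1 - r) * blinfun_apply g z \<le> \<delta>" using r by linarith
      hence "s * ((1 - r) * blinfun_apply g z) \<le> s * \<delta>" using s by (simp add: mult_left_mono)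
      thus ?thesis by (simp add: algebra_simps)
    qed
    moreover have "c * \<delta> \<le> \<delta>" using c1 dpos c0 by (intro mult_left_le_one_le) (auto simp: c_def)
    moreover have "s * (blinfun_apply g z - c * blinfun_apply f z) \<ge> s * l"
      using hz s by (simp add: c_def mult_left_mono)
    ultimately show ?thesis unfolding P_def by (simp add: algebra_simps)
  qed
  have "r * N \<le> N" using r N0 r0 by (intro mult_left_le_one_le) auto
  hence rN: "r * N \<le> 1 + s" "r * N > 0" using N3 N0 r0 by (linarith, simp)
  have wlow: "norm w \<ge> P / (1 + s)"
  proof -
    have "P / (1 + s) \<le> P / (r * N)" using P0 rN by (intro divide_left_mono) auto
    also have "\<dots> \<le> blinfun_apply g w" unfolding gw2 using num rN by (intro divide_right_mono) auto
    also have "\<dots> \<le> norm w" using lin_le[OF ng] .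
    finally show ?thesis .
  qed
  define A where "A = \<alpha> * r + \<beta> * N"
  define A0 where "A0 = (\<alpha> + \<beta>) * (1 - \<delta>) - \<beta> * s"
  have A0e: "A0 = \<alpha> * (1 - \<delta>) + \<beta> * (1 - \<delta> - s)" unfolding A0_def by (simp add: algebra_simps)
  have "\<alpha> * (1 - \<delta>) \<le> \<alpha> * r" using r \<alpha> by (intro mult_left_mono) auto
  moreover have "\<beta> * (1 - \<delta> - s) \<le> \<beta> * N" using N2 \<beta> by (intro mult_left_mono) auto
  ultimately have AA0: "A0 \<le> A" unfolding A_def A0e by linarith
  have "\<alpha> * (1 - \<delta>) > 0" "\<beta> * (1 - \<delta> - s) > 0" using p2 s \<alpha> \<beta> by auto
  hence A0: "A0 > 0" unfolding A0e by linarith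
  have "A0 * (l - \<delta> - \<delta> / s) / (1 + s) = (A0 / s) * (P / (1 + s))"
    using s by (simp add: P_def field_simps)
  also have "\<dots> \<le> (A / s) * norm w"
    using AA0 A0 s wlow P0 by (intro mult_mono divide_right_mono) auto
  also have "\<dots> \<le> (A / norm (u - y)) * norm w"
    using nuy nuy0 nz s A0 AA0 by (intro mult_right_mono divide_left_mono) (auto simp: mult_left_le)
  also have "\<dots> \<le> DW TYPE('a) \<alpha> \<beta>"
    using DW_upper[OF u0 y0 uy \<alpha> \<beta>] by (simp add: A_def r_def N_def w_def)
  finally show ?thesis by (simp add: A0_def)
qed

lemma abs_le1:
  fixes h :: "'a::real_normed_vector \<Rightarrow>\<^sub>L real"
  assumes "norm h \<le> 1" "norm v \<le> 1"
  shows "\<bar>blinfun_apply h v\<bar> \<le> 1"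
proof -
  have "\<bar>blinfun_apply h v\<bar> \<le> norm h * norm v" using norm_blinfun[of h v] by simp
  also have "\<dots> \<le> 1" using assms by (intro mult_le_one) auto
  finally show ?thesis .
qed

lemma main_bound:
  fixes \<alpha> \<beta> l :: real
    and f g :: "nat \<Rightarrow> ('a::real_normed_vector \<Rightarrow>\<^sub>L real)"
    and x :: "nat \<Rightarrow> 'a"
  assumes \<alpha>: "\<alpha> > 0" and \<beta>: "\<beta> > 0"
    and f: "\<And>n. norm (f n) \<le> 1"
    and x: "\<And>n. norm (x n) \<le> 1"
    and lim: "(\<lambda>n. blinfun_apply (f n) (x n)) \<longlonglongrightarrow> 1"
    and g: "\<And>n. norm (g n) \<le> 1"
    and gpos: "Liminf sequentially (\<lambda>n. ereal (blinfun_apply (g n) (x n))) > 0"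
    and l: "l > 0"
    and lL: "ereal l < Liminf sequentially
                (\<lambda>n. ereal (norm (blinfun_apply (g n) (x n) *\<^sub>R f n - g n)))"
  shows "(\<alpha> + \<beta>) * l \<le> DW TYPE('a) \<alpha> \<beta>"
proof -
  define c where "c n = blinfun_apply (g n) (x n)" for n
  define \<delta> where "\<delta> n = 1 - blinfun_apply (f n) (x n)" for n
  define s where "s n = sqrt (\<delta> n) + inverse (real (Suc n))" for n
  define V where "V n = ((\<alpha> + \<beta>) * (1 - \<delta> n) - \<beta> * s n) * (l - \<delta> n - \<delta> n / s n) / (1 + s n)" for n
  have d0: "\<delta> n \<ge> 0" for n using abs_le1[OF f[of n] x[of n]] by (simp add: \<delta>_def)
  have spos: "s n > 0" for n unfolding s_def
    by (rule add_nonneg_pos) (simp_all add: d0 del: of_nat_Suc)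
  have dlim: "\<delta> \<longlonglongrightarrow> 0" unfolding \<delta>_def using tendsto_diff[OF tendsto_const lim, of 1] by simp
  have sqlim: "(\<lambda>n. sqrt (\<delta> n)) \<longlonglongrightarrow> 0" using tendsto_real_sqrt[OF dlim] by simp
  have slim: "s \<longlonglongrightarrow> 0" unfolding s_def using tendsto_add[OF sqlim LIMSEQ_inverse_real_of_nat] by simp
  have dslim: "(\<lambda>n. \<delta> n / s n) \<longlonglongrightarrow> 0"
  proof (rule tendsto_sandwich[OF _ _ tendsto_const sqlim])
    show "\<forall>\<^sub>F n in sequentially. 0 \<le> \<delta> n / s n" using d0 spos by (simp add: less_imp_le)
    show "\<forall>\<^sub>F n in sequentially. \<delta> n / s n \<le> sqrt (\<delta> n)"
    proof (intro always_eventually allI)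
      fix n
      have "sqrt (\<delta> n) \<le> s n" unfolding s_def by simp
      hence "sqrt (\<delta> n) * sqrt (\<delta> n) \<le> sqrt (\<delta> n) * s n" using d0[of n] by (intro mult_left_mono) auto
      hence "\<delta> n \<le> sqrt (\<delta> n) * s n" using d0[of n] by simp
      thus "\<delta> n / s n \<le> sqrt (\<delta> n)" using spos[of n] by (simp add: pos_divide_le_eq)
    qed
  qed
  have Vlim: "V \<longlonglongrightarrow> ((\<alpha> + \<beta>) * (1 - 0) - \<beta> * 0) * (l - 0 - 0) / (1 + 0)"
    unfolding V_def by (intro tendsto_intros dlim slim dslim) simp
  have lim1: "(\<lambda>n. l - \<delta> n - \<delta> n / s n) \<longlonglongrightarrow> l - 0 - 0"
    by (intro tendsto_intros dlim dslim)
  have lim2: "(\<lambda>n. 1 - \<delta> n - s n) \<longlonglongrightarrow> 1 - 0 - 0"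
    by (intro tendsto_intros dlim slim)
  have ev1: "eventually (\<lambda>n. l - \<delta> n - \<delta> n / s n > 0) sequentially"
    using order_tendstoD(1)[OF lim1, of 0] l by simp
  have ev2: "eventually (\<lambda>n. 1 - \<delta> n - s n > 0) sequentially"
    using order_tendstoD(1)[OF lim2, of 0] by simp
  have ev3: "eventually (\<lambda>n. ereal 0 < ereal (c n)) sequentially"
    using less_LiminfD[of 0 sequentially "\<lambda>n. ereal (c n)"] gpos by (simp add: c_def zero_ereal_def)
  have ev4: "eventually (\<lambda>n. ereal l < ereal (norm (c n *\<^sub>R f n - g n))) sequentially"
    using less_LiminfD[OF lL] by (simp add: c_def)
  have ev: "eventually (\<lambda>n. V n \<le> DW TYPE('a) \<alpha> \<beta>) sequentially"
    using ev1 ev2 ev3 ev4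
  proof eventually_elim
    case (elim n)
    have "norm (g n - c n *\<^sub>R f n) > l" using elim(4) by (simp add: norm_minus_commute)
    then obtain z where z: "norm z \<le> 1" "blinfun_apply (g n - c n *\<^sub>R f n) z \<ge> l"
      using approx_norm l by blast
    have hz: "blinfun_apply (g n) z - blinfun_apply (g n) (x n) * blinfun_apply (f n) z \<ge> l"
      using z(2) by (simp add: c_def minus_blinfun.rep_eq scaleR_blinfun.rep_eq)
    show ?case unfolding V_def
      by (rule key[OF x f g _ z(1) hz l spos \<delta>_def elim(1) elim(2) \<alpha> \<beta>])
        (use elim(3) in \<open>simp add: c_def\<close>)
  qed
  have "(\<alpha> + \<beta>) * l \<le> DW TYPE('a) \<alpha> \<beta>"
    using tendsto_le[OF trivial_limit_sequentially tendsto_const Vlim ev] by simp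
  thus ?thesis .
qed

theorem lemma1:
  fixes \<alpha> \<beta> :: real
    and f g :: "nat \<Rightarrow> ('a::banach \<Rightarrow>\<^sub>L real)"
    and x :: "nat \<Rightarrow> 'a"
  assumes dim2: "\<exists>B::'a set. independent B \<and> card B = 2"
    and \<alpha>: "\<alpha> > 0" and \<beta>: "\<beta> > 0"
    and f: "\<And>n. norm (f n) \<le> 1"
    and x: "\<And>n. norm (x n) \<le> 1"
    and lim: "(\<lambda>n. blinfun_apply (f n) (x n)) \<longlonglongrightarrow> 1"
    and g: "\<And>n. norm (g n) \<le> 1"
    and gpos: "Liminf sequentially (\<lambda>n. ereal (blinfun_apply (g n) (x n))) > 0"
  shows "ereal (DW TYPE('a) \<alpha> \<beta>)
           \<ge> ereal (\<alpha> + \<beta>) * max (Liminf sequentially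
                (\<lambda>n. ereal (norm (blinfun_apply (g n) (x n) *\<^sub>R f n - g n)))) 1
         \<and> ereal (\<alpha> + \<beta>) * max (Liminf sequentially
                (\<lambda>n. ereal (norm (blinfun_apply (g n) (x n) *\<^sub>R f n - g n)))) 1
           \<ge> ereal (\<alpha> + \<beta>) * max (Liminf sequentially
                (\<lambda>n. ereal (blinfun_apply (g n) (x n) * norm (f n - g n)))) 1"
proof -
  define D where "D = DW TYPE('a) \<alpha> \<beta>"
  define L where "L = Liminf sequentially
                (\<lambda>n. ereal (norm (blinfun_apply (g n) (x n) *\<^sub>R f n - g n)))"
  define M where "M = Liminf sequentially
                (\<lambda>n. ereal (blinfun_apply (g n) (x n) * norm (f n - g n)))"
  obtain B :: "'a set" where B: "independent B" "card B = 2" using dim2 by blast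
  then obtain u where u: "u \<in> B" by fastforce
  have u0: "u \<noteq> 0" using B(1) u dependent_zero by blast
  have Dge: "\<alpha> + \<beta> \<le> D" unfolding D_def by (rule DW_lower1[OF u0 \<alpha> \<beta>])
  have ab: "\<alpha> + \<beta> > 0" using \<alpha> \<beta> by simp
  have one: "1 \<le> D / (\<alpha> + \<beta>)" using Dge ab by (simp add: pos_le_divide_eq)
  have LD: "L \<le> ereal (D / (\<alpha> + \<beta>))"
  proof (rule dense_le)
    fix y assume y: "y < L"
    show "y \<le> ereal (D / (\<alpha> + \<beta>))"
    proof (cases y)
      case (real l)
      show ?thesis
      proof (cases "l \<le> 0")
        case True thus ?thesis using one real by simp
      next
        case False
        have "(\<alpha> + \<beta>) * l \<le> D" unfolding D_def
          by (rule main_bound[OF \<alpha> \<beta> f x lim g gpos]) (use False y real L_def in auto)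
        thus ?thesis using real ab by (simp add: pos_le_divide_eq mult.commute)
      qed
    qed (use y in auto)
  qed
  have maxL: "max L 1 \<le> ereal (D / (\<alpha> + \<beta>))" using LD one by (simp add: one_ereal_def)
  have part1: "ereal (\<alpha> + \<beta>) * max L 1 \<le> ereal D"
  proof -
    have "ereal (\<alpha> + \<beta>) * max L 1 \<le> ereal (\<alpha> + \<beta>) * ereal (D / (\<alpha> + \<beta>))"
      using maxL ab by (intro ereal_mult_left_mono) auto
    also have "\<dots> = ereal D" using ab by simp
    finally show ?thesis .
  qed
  have MLmax: "max M 1 \<le> max L 1"
  proof (cases "M \<le> 1")
    case True thus ?thesis by simp
  next
    case False
    hence "eventually (\<lambda>n. 1 < ereal (blinfun_apply (g n) (x n) * norm (f n - g n))) sequentially"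
      unfolding M_def by (intro less_LiminfD) simp
    hence "eventually (\<lambda>n. ereal (blinfun_apply (g n) (x n) * norm (f n - g n))
              \<le> ereal (norm (blinfun_apply (g n) (x n) *\<^sub>R f n - g n))) sequentially"
    proof eventually_elim
      case (elim n)
      show ?case using pointwise[OF f abs_le1[OF g x]] elim by (simp add: one_ereal_def)
    qed
    hence "M \<le> L" unfolding M_def L_def by (rule Liminf_mono)
    thus ?thesis by (simp add: max.coboundedI1)
  qed
  have part2: "ereal (\<alpha> + \<beta>) * max M 1 \<le> ereal (\<alpha> + \<beta>) * max L 1"
    using MLmax ab by (intro ereal_mult_left_mono) auto
  show ?thesis using part1 part2 unfolding D_def L_def M_def by simp
qed

end
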